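(* Let $\mathbb{X},\mathbb{Y}$ be real Banach spaces of dimension greater than $1$, and let $\mathcal{F}$ be a family of norm one operators in $\mathbb{L}(\mathbb{X},\mathbb{Y})$. Then the pair $(\mathbb{X},\mathbb{Y})$ has uniform sBPBp with respect to $\mathcal{F}$ if and only if for every $\epsilon>0$, \[\sup\{\|Tz\|: T\in\mathcal{F},\ z\in D(T,\epsilon)\}<1,\qquad\text{where } D(T,\epsilon)=S_{\mathbb{X}}\setminus\bigcup_{x\in M_T}B(x,\epsilon).\]
   Context: $S_{\mathbb{X}}$ is the unit sphere, $B(x,r)$ the open ball of centre $x$ and radius $r$, and $M_T=\{x\in S_{\mathbb{X}}:\|Tx\|=\|T\|\}$. The pair $(\mathbb{X},\mathbb{Y})$ has uniform sBPBp with respect to $\mathcal{F}$ if for every $\epsilon>0$ there exists $\eta(\epsilon)>0$ such that whenever $T\in\mathcal{F}$ and $x_0\in S_{\mathbb{X}}$ satisfy $\|Tx_0\|>1-\eta(\epsilon)$, there exists $x_1\in S_{\mathbb{X}}$ with $\|Tx_1\|=1$ and $\|x_1-x_0\|<\epsilon$. *)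

theory Defs
  imports "HOL-Analysis.Analysis" "HOL-Library.Extended_Real"
begin

definition norm_attain_set :: "('a::real_normed_vector \<Rightarrow>\<^sub>L 'b::real_normed_vector) \<Rightarrow> 'a set" where
  "norm_attain_set T = {x. norm x = 1 \<and> norm (blinfun_apply T x) = norm T}"

definition D_set :: "('a::real_normed_vector \<Rightarrow>\<^sub>L 'b::real_normed_vector) \<Rightarrow> real \<Rightarrow> 'a set" where
  "D_set T \<epsilon> = sphere 0 1 - (\<Union>x\<in>norm_attain_set T. ball x \<epsilon>)"

definition uniform_sBPBp :: "('a::real_normed_vector \<Rightarrow>\<^sub>L 'b::real_normed_vector) set \<Rightarrow> bool" where
  "uniform_sBPBp F \<longleftrightarrow>
     (\<forall>\<epsilon>>0. \<exists>\<eta>>0. \<forall>T\<in>F. \<forall>x0. norm x0 = 1 \<and> norm (blinfun_apply T x0) > 1 - \<eta> \<longrightarrow>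
        (\<exists>x1. norm x1 = 1 \<and> norm (blinfun_apply T x1) = 1 \<and> norm (x1 - x0) < \<epsilon>))"

end

theory Submission
  imports Defs
begin

theorem theorem2p11:
  fixes F :: "('a::banach \<Rightarrow>\<^sub>L 'b::banach) set"
  assumes dimX: "\<exists>u v::'a. independent {u, v} \<and> u \<noteq> v"
    and dimY: "\<exists>u v::'b. independent {u, v} \<and> u \<noteq> v"
    and normF: "\<forall>T\<in>F. norm T = 1"
  shows "uniform_sBPBp F \<longleftrightarrow>
    (\<forall>\<epsilon>>0. (SUP p\<in>{(T, z). T \<in> F \<and> z \<in> D_set T \<epsilon>}. ereal (norm (blinfun_apply (fst p) (snd p)))) < 1)"
proof
  assume U: "uniform_sBPBp F"
  show "\<forall>\<epsilon>>0. (SUP p\<in>{(T, z). T \<in> F \<and> z \<in> D_set T \<epsilon>}. ereal (norm (blinfun_apply (fst p) (snd p)))) < 1"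
  proof (intro allI impI)
    fix e :: real assume e: "e > 0"
    from U e obtain \<eta> where eta: "\<eta> > 0" and H: "\<forall>T\<in>F. \<forall>x0. norm x0 = 1 \<and> norm (blinfun_apply T x0) > 1 - \<eta> \<longrightarrow>
        (\<exists>x1. norm x1 = 1 \<and> norm (blinfun_apply T x1) = 1 \<and> norm (x1 - x0) < e)"
      unfolding uniform_sBPBp_def by blast
    have "(SUP p\<in>{(T, z). T \<in> F \<and> z \<in> D_set T e}. ereal (norm (blinfun_apply (fst p) (snd p)))) \<le> ereal (1 - \<eta>)"
    proof (rule SUP_least)
      fix p assume "p \<in> {(T, z). T \<in> F \<and> z \<in> D_set T e}"
      then obtain T z where p: "p = (T, z)" and T: "T \<in> F" and z: "z \<in> D_set T e" by blast
      have zs: "norm z = 1" and nb: "\<forall>x\<in>norm_attain_set T. z \<notin> ball x e"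
        using z unfolding D_set_def by auto
      have "norm (blinfun_apply T z) \<le> 1 - \<eta>"
      proof (rule ccontr)
        assume "\<not> ?thesis"
        then obtain x1 where x1: "norm x1 = 1" "norm (blinfun_apply T x1) = 1" "norm (x1 - z) < e"
          using H T zs by force
        have "x1 \<in> norm_attain_set T" using x1 normF T unfolding norm_attain_set_def by auto
        moreover have "z \<in> ball x1 e" using x1(3) by (simp add: dist_norm)
        ultimately show False using nb by blast
      qed
      then show "ereal (norm (blinfun_apply (fst p) (snd p))) \<le> ereal (1 - \<eta>)" using p by simp
    qed
    also have "\<dots> < 1" using eta by simp
    finally show "(SUP p\<in>{(T, z). T \<in> F \<and> z \<in> D_set T e}. ereal (norm (blinfun_apply (fst p) (snd p)))) < 1" .
  qed
next
  assume S: "\<forall>\<epsilon>>0. (SUP p\<in>{(T, z). T \<in> F \<and> z \<in> D_set T \<epsilon>}. ereal (norm (blinfun_apply (fst p) (snd p)))) < 1"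
  show "uniform_sBPBp F"
    unfolding uniform_sBPBp_def
  proof (intro allI impI)
    fix e :: real assume e: "e > 0"
    define s where "s = (SUP p\<in>{(T, z). T \<in> F \<and> z \<in> D_set T e}. ereal (norm (blinfun_apply (fst p) (snd p))))"
    have "s < 1" using S e s_def by blast
    then obtain r :: real where r: "s < ereal r" "r < 1"
      by (metis ereal_dense2 less_ereal.simps(1) one_ereal_def)
    show "\<exists>\<eta>>0. \<forall>T\<in>F. \<forall>x0. norm x0 = 1 \<and> norm (blinfun_apply T x0) > 1 - \<eta> \<longrightarrow>
        (\<exists>x1. norm x1 = 1 \<and> norm (blinfun_apply T x1) = 1 \<and> norm (x1 - x0) < e)"
    proof (intro exI[of _ "1 - r"] conjI ballI allI impI)
      show "1 - r > 0" using r by simp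
      fix T x0 assume T: "T \<in> F" and x0: "norm x0 = 1 \<and> norm (blinfun_apply T x0) > 1 - (1 - r)"
      have "x0 \<notin> D_set T e"
      proof
        assume "x0 \<in> D_set T e"
        then have "ereal (norm (blinfun_apply T x0)) \<le> s"
          unfolding s_def by (intro SUP_upper2[of "(T, x0)"]) (use T in auto)
        then have "ereal (norm (blinfun_apply T x0)) < ereal r" using r(1) by (rule le_less_trans)
        then show False using x0 by simp
      qed
      then obtain x where x: "x \<in> norm_attain_set T" "x0 \<in> ball x e"
        using x0 unfolding D_set_def by auto
      show "\<exists>x1. norm x1 = 1 \<and> norm (blinfun_apply T x1) = 1 \<and> norm (x1 - x0) < e"
        using x normF T unfolding norm_attain_set_def by (intro exI[of _ x]) (auto simp: dist_norm)
    qed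
  qed
qed

end
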